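(* Let $\Phi:\mathcal{K}^n\to\mathcal{K}^n$ be a continuous, translation invariant Minkowski valuation satisfying (VC), and for $K\in\mathcal{K}^n$ write $V_n(\Phi(\lambda K))=\sum_{j\ge 0}v_j^{\Phi}(K)\lambda^j$ for $\lambda>0$. Then: (i) if $\dim K<n$, then $v_l^{\Phi}(K)=0$ for all $l$; (ii) if $\dim K=n$, then $v_n^{\Phi}(K)\neq 0$; (iii) if $\dim K=n$, then $v_l^{\Phi}(K)=0$ for every $l\neq n$.
   Context: $\mathcal{K}^n$ is the space of convex bodies in $\mathbb{R}^n$ with the Hausdorff metric and Minkowski addition. A Minkowski valuation satisfies $\Phi(K)+\Phi(L)=\Phi(K\cup L)+\Phi(K\cap L)$ whenever $K,L,K\cup L\in\mathcal{K}^n$; translation invariant means $\Phi(K+t)=\Phi(K)$. For such $\Phi$ and fixed $K$, the function $\lambda\mapsto V_n(\Phi(\lambda K))$, $\lambda>0$, is a polynomial in $\lambda$ (this follows from McMullen's decomposition of the support function $h(\Phi(\lambda K),u)$ into homogeneous parts and the multilinear extension of mixed volumes); $v_j^{\Phi}(K)$ denotes its coefficient of $\lambda^j$. (VC): there are $c,C>0$ with $cV_n(K)\le V_n(\Phi(K))\le CV_n(K)$ for all $K$. $\dim$ is the dimension of the affine hull. *)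

theory Defs
  imports "HOL-Analysis.Analysis" "HOL-Library.Set_Algebras" "HOL-Computational_Algebra.Polynomial"
begin

definition convex_body :: "'a::euclidean_space set \<Rightarrow> bool" where
  "convex_body K \<longleftrightarrow> K \<noteq> {} \<and> compact K \<and> convex K"

definition hausdorff_dist :: "'a::euclidean_space set \<Rightarrow> 'a set \<Rightarrow> real" where
  "hausdorff_dist A B = max (SUP x\<in>A. infdist x B) (SUP y\<in>B. infdist y A)"

definition hausdorff_continuous :: "('a::euclidean_space set \<Rightarrow> 'a set) \<Rightarrow> bool" where
  "hausdorff_continuous \<Phi> \<longleftrightarrow>
     (\<forall>K. convex_body K \<longrightarrow> (\<forall>e>0. \<exists>d>0. \<forall>L. convex_body L \<longrightarrow>
        hausdorff_dist K L < d \<longrightarrow> hausdorff_dist (\<Phi> K) (\<Phi> L) < e))"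

text \<open>Minkowski valuation on convex bodies (Minkowski addition is set addition).\<close>
definition minkowski_valuation :: "('a::euclidean_space set \<Rightarrow> 'a set) \<Rightarrow> bool" where
  "minkowski_valuation \<Phi> \<longleftrightarrow>
     (\<forall>K. convex_body K \<longrightarrow> convex_body (\<Phi> K)) \<and>
     (\<forall>K L. convex_body K \<and> convex_body L \<and> convex_body (K \<union> L) \<longrightarrow>
        \<Phi> K + \<Phi> L = \<Phi> (K \<union> L) + \<Phi> (K \<inter> L))"

definition translation_invariant :: "('a::euclidean_space set \<Rightarrow> 'a set) \<Rightarrow> bool" where
  "translation_invariant \<Phi> \<longleftrightarrow>
     (\<forall>K t. convex_body K \<longrightarrow> \<Phi> ((\<lambda>x. x + t) ` K) = \<Phi> K)"

definition volume_condition :: "('a::euclidean_space set \<Rightarrow> 'a set) \<Rightarrow> bool" where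
  "volume_condition \<Phi> \<longleftrightarrow>
     (\<exists>c C. c > 0 \<and> C > 0 \<and> (\<forall>K. convex_body K \<longrightarrow>
        c * measure lebesgue K \<le> measure lebesgue (\<Phi> K) \<and>
        measure lebesgue (\<Phi> K) \<le> C * measure lebesgue K))"

end

theory Submission imports Defs begin

lemma small_zero:
  fixes q :: "real poly"
  assumes "\<forall>t>0. \<bar>poly q t\<bar> \<le> b * t^k" "k > 0"
  shows "poly q 0 = 0"
proof -
  have c: "(poly q \<longlongrightarrow> poly q 0) (at_right 0)"
    by (intro tendsto_within_subset[OF isCont_tendsto_compose[of _ "poly q" "\<lambda>x. x" "at 0"]]) auto
  have l1': "((\<lambda>t. b * t^k) \<longlongrightarrow> b * 0^k) (at_right (0::real))"
    by (intro tendsto_intros)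
  have l2': "((\<lambda>t. - (b * t^k)) \<longlongrightarrow> - (b * 0^k)) (at_right (0::real))"
    by (intro tendsto_intros)
  have l1: "((\<lambda>t. b * t^k) \<longlongrightarrow> 0) (at_right (0::real))" using l1' assms(2) by (simp add: zero_power)
  have l2: "((\<lambda>t. - (b * t^k)) \<longlongrightarrow> 0) (at_right (0::real))" using l2' assms(2) by (simp add: zero_power)
  have ev1: "eventually (\<lambda>t. - (b * t^k) \<le> poly q t) (at_right 0)"
    using assms(1) by (auto simp: abs_le_iff intro!: eventually_at_rightI[of 0 1])
  have ev2: "eventually (\<lambda>t. poly q t \<le> b * t^k) (at_right 0)"
    using assms(1) by (auto simp: abs_le_iff intro!: eventually_at_rightI[of 0 1])
  have "(poly q \<longlongrightarrow> 0) (at_right 0)"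
    using tendsto_sandwich[OF ev1 ev2 l2 l1] .
  then show ?thesis using c tendsto_unique[OF trivial_limit_at_right_real] by blast
qed

lemma poly_pow_bounds:
  fixes p :: "real poly"
  assumes b: "\<forall>t>0. a * t^n \<le> poly p t \<and> poly p t \<le> b * t^n" and a: "a > 0"
  shows "coeff p n \<noteq> 0 \<and> (\<forall>l. l \<noteq> n \<longrightarrow> coeff p l = 0)"
proof -
  have "p \<noteq> 0" using b[rule_format, of 1] a by auto
  then obtain q where pq: "p = [:- 0, 1:] ^ order 0 p * q" and nd: "\<not> [:- 0, 1:] dvd q"
    using order_decomp by blast
  define m where "m = order 0 p"
  have q0: "poly q 0 \<noteq> 0" using nd by (simp add: dvd_iff_poly_eq_0)
  have pt: "poly p t = t^m * poly q t" for t
    using arg_cong[OF pq, of "\<lambda>p. poly p t"] unfolding m_def by (simp add: poly_power)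
  have "m = n"
  proof (rule ccontr)
    assume "m \<noteq> n"
    then consider "m < n" | "m > n" by linarith
    then show False
    proof cases
      case 1
      have "\<forall>t>0. \<bar>poly q t\<bar> \<le> b * t^(n-m)"
      proof (intro allI impI)
        fix t :: real assume t: "t > 0"
        have "t^n = t^m * t^(n-m)" using 1 by (simp add: power_add[symmetric])
        then have "a * t^m * t^(n-m) \<le> t^m * poly q t \<and> t^m * poly q t \<le> b * t^m * t^(n-m)"
          using b[rule_format, OF t] pt[of t] by (simp add: mult_ac)
        then have "a * t^(n-m) \<le> poly q t \<and> poly q t \<le> b * t^(n-m)"
          using t by (simp add: mult_ac mult_le_cancel_left_pos)
        moreover have "0 \<le> a * t^(n-m)" using a t by simp
        ultimately show "\<bar>poly q t\<bar> \<le> b * t^(n-m)" by linarith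
      qed
      then show False using small_zero[of q b "n-m"] 1 q0 by simp
    next
      case 2
      define r where "r = [:- 0, 1:] ^ (m-n) * q"
      have rt: "poly r t = t^(m-n) * poly q t" for t by (simp add: r_def poly_power)
      have r0: "poly r 0 = 0" using 2 by (simp add: rt)
      have ineq: "a \<le> poly r t" if t: "t > 0" for t
      proof -
        have "t^m = t^n * t^(m-n)" using 2 by (simp add: power_add[symmetric])
        then have "t^n * a \<le> t^n * poly r t"
          using b[rule_format, OF t] pt[of t] rt[of t] by (simp add: mult_ac)
        then show ?thesis using t by (simp add: mult_le_cancel_left_pos)
      qed
      have c: "(poly r \<longlongrightarrow> poly r 0) (at_right 0)"
        by (intro tendsto_within_subset[OF isCont_tendsto_compose[of _ "poly r" "\<lambda>x. x" "at 0"]]) auto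
      have "a \<le> poly r 0"
        by (rule tendsto_lowerbound[OF c]) (auto intro!: eventually_at_rightI[of 0 1] ineq)
      then show False using r0 a by simp
    qed
  qed
  have qb: "a \<le> poly q t \<and> poly q t \<le> b" if t: "t > 0" for t
    using b[rule_format, OF t] pt[of t] t \<open>m = n\<close>
    by (simp add: mult_le_cancel_left_pos mult.commute[of _ "t^n"])
  have "degree q = 0"
  proof (rule ccontr)
    assume d: "degree q \<noteq> 0"
    have qn0: "q \<noteq> 0" using q0 by auto
    define r where "r = reflect_poly q"
    have "\<forall>t>0. \<bar>poly r t\<bar> \<le> b * t^(degree q)"
    proof (intro allI impI)
      fix t :: real assume t: "t > 0"
      have "poly r t = t ^ degree q * poly q (1/t)"
        using t by (simp add: r_def poly_reflect_poly_nz inverse_eq_divide)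
      moreover have "a \<le> poly q (1/t) \<and> poly q (1/t) \<le> b" using qb t by simp
      ultimately show "\<bar>poly r t\<bar> \<le> b * t^(degree q)"
        using t a by (simp add: abs_mult mult.commute)
    qed
    then have "poly r 0 = 0" using small_zero d by blast
    moreover have "poly r 0 = lead_coeff q" by (simp add: r_def poly_0_coeff_0)
    ultimately show False using qn0 by simp
  qed
  then obtain c where qc: "q = [:c:]" by (metis degree_eq_zeroE)
  have "a \<le> c" using qb[of 1] qc by simp
  then have "c \<noteq> 0" using a by simp
  moreover have "p = monom c n" using pq qc \<open>m = n\<close> unfolding m_def
    by (simp add: monom_altdef mult.commute)
  ultimately show ?thesis by simp
qed

lemma scale_measure:
  fixes K :: "'a::euclidean_space set"
  assumes K: "compact K" and t: "t > 0"
  shows "measure lebesgue ((\<lambda>x. t *\<^sub>R x) ` K) = t^DIM('a) * measure lebesgue K"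
proof -
  have cK: "compact ((\<lambda>x. t *\<^sub>R x) ` K)" by (intro compact_continuous_image continuous_intros K)
  have bor: "(\<lambda>x. t *\<^sub>R x) ` K \<in> sets borel" using cK by (simp add: compact_imp_closed borel_closed)
  have pre: "(\<lambda>x. 0 + t *\<^sub>R x) -` ((\<lambda>x. t *\<^sub>R x) ` K) = K" using t by auto
  have "emeasure lborel ((\<lambda>x. t *\<^sub>R x) ` K) = ennreal (\<bar>t\<bar>^DIM('a)) * emeasure lborel K"
    apply (subst lborel_affine[of t 0])
    using t bor pre by (simp_all add: emeasure_density emeasure_distr nn_integral_cmult_indicator)
  then have "measure lborel ((\<lambda>x. t *\<^sub>R x) ` K) = t^DIM('a) * measure lborel K"
    using t by (simp add: measure_def enn2real_mult)
  moreover have "K \<in> sets borel" using K by (simp add: compact_imp_closed borel_closed)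
  ultimately show ?thesis
    using bor by simp
qed

lemma low_measure:
  fixes K :: "'a::euclidean_space set"
  assumes K: "convex_body K" and d: "aff_dim K < DIM('a)"
  shows "measure lebesgue K = 0"
proof -
  have "interior K = {}" using d by (simp add: interior_rel_interior_gen)
  moreover have "closed K" using K by (simp add: convex_body_def compact_imp_closed)
  ultimately have "K = frontier K" by (simp add: frontier_def closure_closed)
  then have "negligible K" using negligible_convex_frontier K by (metis convex_body_def)
  then show ?thesis by (simp add: negligible_imp_measure0)
qed

lemma full_measure:
  fixes K :: "'a::euclidean_space set"
  assumes K: "convex_body K" and d: "aff_dim K = DIM('a)"
  shows "measure lebesgue K > 0"
proof -
  have "interior K \<noteq> {}" using d K
    by (simp add: interior_rel_interior_gen convex_body_def rel_interior_eq_empty)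
  then obtain x e where e: "e > 0" "ball x e \<subseteq> K"
    by (metis all_not_in_conv interior_subset open_contains_ball_eq open_interior subset_trans)
  have Km: "K \<in> lmeasurable" using K by (simp add: convex_body_def lmeasurable_compact)
  have "measure lebesgue (ball x e) \<le> measure lebesgue K"
    using e Km by (intro measure_mono_fmeasurable) auto
  moreover have "measure lebesgue (ball x e) > 0" using e by (simp add: content_ball_pos)
  ultimately show ?thesis by linarith
qed
lemma convex_body_scale:
  assumes "convex_body K"
  shows "convex_body ((\<lambda>x. t *\<^sub>R x) ` K)"
  using assms unfolding convex_body_def
  by (auto intro!: compact_continuous_image continuous_intros convex_scaling)

theorem corollary3p3:
  fixes \<Phi> :: "'a::euclidean_space set \<Rightarrow> 'a set"
    and K :: "'a set"
    and p :: "real poly"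
  assumes "minkowski_valuation \<Phi>"
    and "hausdorff_continuous \<Phi>"
    and "translation_invariant \<Phi>"
    and "volume_condition \<Phi>"
    and "convex_body K"
    and "\<forall>t>0. measure lebesgue (\<Phi> ((\<lambda>x. t *\<^sub>R x) ` K)) = poly p t"
  shows "(aff_dim K < int DIM('a) \<longrightarrow> (\<forall>l. coeff p l = 0))
       \<and> (aff_dim K = int DIM('a) \<longrightarrow> coeff p DIM('a) \<noteq> 0)
       \<and> (aff_dim K = int DIM('a) \<longrightarrow> (\<forall>l. l \<noteq> DIM('a) \<longrightarrow> coeff p l = 0))"
proof -
  obtain c C where cC: "c > 0" "C > 0" and vc: "\<And>K. convex_body K \<Longrightarrow>
        c * measure lebesgue K \<le> measure lebesgue (\<Phi> K) \<and>
        measure lebesgue (\<Phi> K) \<le> C * measure lebesgue K"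
    using assms(4) unfolding volume_condition_def by blast
  have cK: "compact K" using assms(5) by (simp add: convex_body_def)
  have bnd: "c * (t^DIM('a) * measure lebesgue K) \<le> poly p t \<and> poly p t \<le> C * (t^DIM('a) * measure lebesgue K)"
    if t: "t > 0" for t
    using vc[OF convex_body_scale[OF assms(5), of t]] assms(6) t scale_measure[OF cK t] by simp
  have A: "\<forall>l. coeff p l = 0" if d: "aff_dim K < int DIM('a)"
  proof -
    have "poly p t = 0" if "t > 0" for t using bnd[OF that] low_measure[OF assms(5) d] by simp
    then have "{0<..} \<subseteq> {x. poly p x = 0}" by auto
    then have "p = 0" using poly_roots_finite[of p] infinite_Ioi[of "0::real"]
      by (metis finite_subset)
    then show ?thesis by simp
  qed
  have B: "coeff p DIM('a) \<noteq> 0 \<and> (\<forall>l. l \<noteq> DIM('a) \<longrightarrow> coeff p l = 0)" if d: "aff_dim K = int DIM('a)"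
  proof -
    have m: "measure lebesgue K > 0" using full_measure[OF assms(5) d] .
    show ?thesis
      by (rule poly_pow_bounds[of "c * measure lebesgue K" _ p "C * measure lebesgue K"])
         (use bnd cC m in \<open>auto simp: mult_ac\<close>)
  qed
  show ?thesis using A B by blast
qed

end
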